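(* Let $\Phi$ satisfy the Standing Assumption. Then for every $\lambda\in\mathbb R$ and $t\ge0$, $$\mathfrak e_\Phi(t;\lambda)=\sum_{k=0}^{+\infty}\lambda^ku_k^*(t).$$
   Context: Standing Assumption: $\Phi$ is a special Bernstein function (both $\Phi$ and $\lambda/\Phi(\lambda)$ are Bernstein functions) with Lévy–Khintchine triple $a_\Phi=b_\Phi=0$, $\nu_\Phi(0,\infty)=\infty$; the potential measure of the subordinator $\sigma_\Phi$ (with $\mathbb E e^{-\lambda\sigma_\Phi(t)}=e^{-t\Phi(\lambda)}$) has a non-increasing density $u_\Phi\ge0$, and $u_\Phi(t)\le Ct^{\beta-1}$ on $(0,t_0)$ for some $t_0,C>0,\beta\in(0,1)$. $U_\Phi(t)=\int_0^tu_\Phi(s)ds$. $L_\Phi(t)=\inf\{y>0:\sigma_\Phi(y)>t\}$ and $\mathfrak e_\Phi(t;\lambda)=\mathbb E[e^{\lambda L_\Phi(t)}]$. Define $u_0^*\equiv1$, $u_1^*=U_\Phi$, $u_{k+1}^*(t)=\int_0^tu_\Phi(t-s)u_k^*(s)ds$ for $k\ge1$. *)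

theory Defs
  imports "HOL-Probability.Probability"
begin

definition bernstein :: "(real \<Rightarrow> real) \<Rightarrow> bool" where
  "bernstein f \<longleftrightarrow>
     (\<forall>x>0. 0 \<le> f x) \<and>
     (\<forall>n. \<forall>x>0. ((deriv ^^ n) f) differentiable (at x)) \<and>
     (\<forall>n\<ge>1. \<forall>x>0. 0 \<le> (-1) ^ (n - 1) * (deriv ^^ n) f x)"

definition special_bernstein :: "(real \<Rightarrow> real) \<Rightarrow> bool" where
  "special_bernstein f \<longleftrightarrow> bernstein f \<and> bernstein (\<lambda>x. x / f x)"

text \<open>Levy-Khintchine triple (a, b, nu) = (0, 0, nu):
  Phi(l) = integral of (1 - exp(-l x)) against the Levy measure nu on (0,infinity).\<close>
definition LK_triple_zero :: "(real \<Rightarrow> real) \<Rightarrow> real measure \<Rightarrow> bool" where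
  "LK_triple_zero Phi nu \<longleftrightarrow>
     sets nu = sets borel \<and> emeasure nu {..0} = 0 \<and>
     (\<integral>\<^sup>+ x. ennreal (min 1 x) \<partial>nu) < \<infinity> \<and>
     (\<forall>l>0. ennreal (Phi l) = (\<integral>\<^sup>+ x. ennreal (1 - exp (- l * x)) \<partial>nu))"

definition subordinator :: "'a measure \<Rightarrow> (real \<Rightarrow> 'a \<Rightarrow> real) \<Rightarrow> (real \<Rightarrow> real) \<Rightarrow> bool" where
  "subordinator M sg Phi \<longleftrightarrow>
     prob_space M \<and>
     (\<forall>t\<ge>0. sg t \<in> borel_measurable M) \<and>
     (\<forall>\<omega>\<in>space M. sg 0 \<omega> = 0 \<and> mono_on {0..} (\<lambda>t. sg t \<omega>) \<and>
        (\<forall>t\<ge>0. continuous (at_right t) (\<lambda>s. sg s \<omega>))) \<and>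
     (\<forall>n (ts :: nat \<Rightarrow> real). 0 \<le> ts 0 \<and> (\<forall>i<n. ts i \<le> ts (Suc i)) \<longrightarrow>
        prob_space.indep_vars M (\<lambda>_. borel) (\<lambda>i \<omega>. sg (ts (Suc i)) \<omega> - sg (ts i) \<omega>) {..<n}) \<and>
     (\<forall>s\<ge>0. \<forall>t\<ge>0. distr M borel (\<lambda>\<omega>. sg (s + t) \<omega> - sg s \<omega>) = distr M borel (sg t)) \<and>
     (\<forall>l>0. \<forall>t\<ge>0. prob_space.expectation M (\<lambda>\<omega>. exp (- l * sg t \<omega>)) = exp (- t * Phi l))"

definition potential_density :: "'a measure \<Rightarrow> (real \<Rightarrow> 'a \<Rightarrow> real) \<Rightarrow> (real \<Rightarrow> real) \<Rightarrow> bool" where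
  "potential_density M sg u \<longleftrightarrow>
     (\<forall>A\<in>sets borel.
        (\<integral>\<^sup>+ t. indicator {0..} t * emeasure M {\<omega>\<in>space M. sg t \<omega> \<in> A} \<partial>lborel)
        = (\<integral>\<^sup>+ x. indicator (A \<inter> {0<..}) x * ennreal (u x) \<partial>lborel))"

definition inv_sub :: "(real \<Rightarrow> 'a \<Rightarrow> real) \<Rightarrow> real \<Rightarrow> 'a \<Rightarrow> real" where
  "inv_sub sg t \<omega> = Inf {y. 0 < y \<and> t < sg y \<omega>}"

definition Upot :: "(real \<Rightarrow> real) \<Rightarrow> real \<Rightarrow> real" where
  "Upot u t = (LINT s:{0..t}|lborel. u s)"

fun ustar :: "(real \<Rightarrow> real) \<Rightarrow> nat \<Rightarrow> real \<Rightarrow> real" where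
  "ustar u 0 t = 1"
| "ustar u (Suc 0) t = Upot u t"
| "ustar u (Suc (Suc k)) t = (LINT s:{0..t}|lborel. u (t - s) * ustar u (Suc k) s)"

end

theory Submission
  imports Defs
begin


lemma pow_has_integral:
  fixes L :: real assumes "0 \<le> L"
  shows "((\<lambda>s. s^k / fact k) has_integral (L^Suc k / fact (Suc k))) {0..L}"
proof -
  have "((\<lambda>s. s^k / fact k) has_integral ((\<lambda>s. s^Suc k / fact (Suc k)) L - (\<lambda>s. s^Suc k / fact (Suc k)) 0)) {0..L}"
  proof (rule fundamental_theorem_of_calculus[OF assms])
    fix x :: real assume "x \<in> {0..L}"
    show "((\<lambda>s. s^Suc k / fact (Suc k)) has_vector_derivative x^k / fact k) (at x within {0..L})"
    proof -
      have "((\<lambda>s::real. s^Suc k) has_real_derivative real (Suc k) * x^k) (at x)" using DERIV_pow[of "Suc k" x] by simp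
      then have "((\<lambda>s::real. s^Suc k / fact (Suc k)) has_real_derivative (real (Suc k) * x^k) / fact (Suc k)) (at x)"
        by (rule DERIV_cdivide)
      then have "((\<lambda>s::real. s^Suc k / fact (Suc k)) has_real_derivative (real (Suc k) * x^k) / fact (Suc k)) (at x within {0..L})"
        by (rule has_field_derivative_at_within)
      moreover have "(real (Suc k) * x^k) / fact (Suc k) = x^k / fact k"
        unfolding fact_Suc[of k] by (subst mult_divide_mult_cancel_left) auto
      ultimately show ?thesis using has_real_derivative_iff_has_vector_derivative by metis
    qed
  qed
  then show ?thesis by simp
qed

lemma nn_pow:
  fixes L :: real assumes "0 \<le> L"
  shows "(\<integral>\<^sup>+ s. ennreal (s^k / fact k) * indicator {0..L} s \<partial>lborel) = ennreal (L^Suc k / fact (Suc k))"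
  by (rule nn_integral_has_integral_lebesgue'[OF _ pow_has_integral[OF assms]]) auto

lemma nn_pow':
  fixes L :: real assumes "0 \<le> L"
  shows "(\<integral>\<^sup>+ s. ennreal (s^k / fact k) * indicator {0..<L} s \<partial>lborel) = ennreal (L^Suc k / fact (Suc k))"
proof -
  have "(\<integral>\<^sup>+ s. ennreal (s^k / fact k) * indicator {0..<L} s \<partial>lborel) = (\<integral>\<^sup>+ s. ennreal (s^k / fact k) * indicator {0..L} s \<partial>lborel)"
    apply (rule nn_integral_cong_AE)
    using AE_lborel_singleton[of L] by eventually_elim (auto simp: indicator_def)
  then show ?thesis using nn_pow[OF assms] by simp
qed



lemma simplex:
  fixes h :: "real \<Rightarrow> ennreal"
  assumes [measurable]: "h \<in> borel_measurable borel"
  shows "(\<integral>\<^sup>+ s. ennreal (s^Suc k / fact (Suc k)) * indicator {0..} s * h s \<partial>lborel) =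
    (\<integral>\<^sup>+ b. indicator {0..} b * (\<integral>\<^sup>+ a. ennreal (a^k / fact k) * indicator {0..} a * h (a + b) \<partial>lborel) \<partial>lborel)"
proof -
  have PS: "pair_sigma_finite lborel lborel" by unfold_locales
  have [measurable]: "h \<in> borel_measurable lborel" by simp
  have [measurable]: "(\<lambda>p::real\<times>real. indicator {fst p..} (snd p) :: ennreal) \<in> borel_measurable (lborel \<Otimes>\<^sub>M lborel)"
    unfolding indicator_def atLeast_iff by measurable
  have inner: "\<And>a. (\<integral>\<^sup>+ b. indicator {0..} b * h (a + b) \<partial>lborel) = (\<integral>\<^sup>+ s. indicator {a..} s * h s \<partial>lborel)"
  proof -
    fix a :: real
    have "(\<integral>\<^sup>+ s. indicator {a..} s * h s \<partial>lborel) = (\<integral>\<^sup>+ x. indicator {a..} (a + 1 * x) * h (a + 1 * x) \<partial>lborel)"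
      using nn_integral_real_affine[of "\<lambda>s. indicator {a..} s * h s" 1 a] by simp
    also have "\<dots> = (\<integral>\<^sup>+ b. indicator {0..} b * h (a + b) \<partial>lborel)"
      by (intro nn_integral_cong) (auto simp: indicator_def add.commute)
    finally show "(\<integral>\<^sup>+ b. indicator {0..} b * h (a + b) \<partial>lborel) = (\<integral>\<^sup>+ s. indicator {a..} s * h s \<partial>lborel)" by simp
  qed
  have "(\<integral>\<^sup>+ b. indicator {0..} b * (\<integral>\<^sup>+ a. ennreal (a^k / fact k) * indicator {0..} a * h (a + b) \<partial>lborel) \<partial>lborel)
      = (\<integral>\<^sup>+ b. (\<integral>\<^sup>+ a. indicator {0..} b * (ennreal (a^k / fact k) * indicator {0..} a * h (a + b)) \<partial>lborel) \<partial>lborel)"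
    by (intro nn_integral_cong nn_integral_cmult[symmetric]) measurable
  also have "\<dots> = (\<integral>\<^sup>+ a. (\<integral>\<^sup>+ b. indicator {0..} b * (ennreal (a^k / fact k) * indicator {0..} a * h (a + b)) \<partial>lborel) \<partial>lborel)"
    by (rule pair_sigma_finite.Fubini'[OF PS]) measurable
  also have "\<dots> = (\<integral>\<^sup>+ a. ennreal (a^k / fact k) * indicator {0..} a * (\<integral>\<^sup>+ b. indicator {0..} b * h (a + b) \<partial>lborel) \<partial>lborel)"
    by (intro nn_integral_cong, subst nn_integral_cmult[symmetric]) (auto intro!: nn_integral_cong simp: ac_simps)
  also have "\<dots> = (\<integral>\<^sup>+ a. ennreal (a^k / fact k) * indicator {0..} a * (\<integral>\<^sup>+ s. indicator {a..} s * h s \<partial>lborel) \<partial>lborel)"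
    by (simp add: inner)
  also have "\<dots> = (\<integral>\<^sup>+ a. (\<integral>\<^sup>+ s. ennreal (a^k / fact k) * indicator {0..} a * (indicator {a..} s * h s) \<partial>lborel) \<partial>lborel)"
    by (intro nn_integral_cong nn_integral_cmult[symmetric]) measurable
  also have "\<dots> = (\<integral>\<^sup>+ s. (\<integral>\<^sup>+ a. ennreal (a^k / fact k) * indicator {0..} a * (indicator {a..} s * h s) \<partial>lborel) \<partial>lborel)"
    by (rule pair_sigma_finite.Fubini'[OF PS, symmetric]) measurable
  also have "\<dots> = (\<integral>\<^sup>+ s. (\<integral>\<^sup>+ a. ennreal (a^k / fact k) * indicator {0..s} a \<partial>lborel) * (indicator {0..} s * h s) \<partial>lborel)"
  proof (intro nn_integral_cong)
    fix s :: real
    have "(\<integral>\<^sup>+ a. ennreal (a^k / fact k) * indicator {0..} a * (indicator {a..} s * h s) \<partial>lborel)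
       = (\<integral>\<^sup>+ a. ennreal (a^k / fact k) * indicator {0..s} a * (indicator {0..} s * h s) \<partial>lborel)"
      by (intro nn_integral_cong) (auto simp: indicator_def)
    also have "\<dots> = (\<integral>\<^sup>+ a. ennreal (a^k / fact k) * indicator {0..s} a \<partial>lborel) * (indicator {0..} s * h s)"
      by (rule nn_integral_multc) measurable
    finally show "(\<integral>\<^sup>+ a. ennreal (a^k / fact k) * indicator {0..} a * (indicator {a..} s * h s) \<partial>lborel)
       = (\<integral>\<^sup>+ a. ennreal (a^k / fact k) * indicator {0..s} a \<partial>lborel) * (indicator {0..} s * h s)" .
  qed
  also have "\<dots> = (\<integral>\<^sup>+ s. ennreal (s^Suc k / fact (Suc k)) * indicator {0..} s * h s \<partial>lborel)"
  proof (intro nn_integral_cong)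
    fix s :: real
    show "(\<integral>\<^sup>+ a. ennreal (a^k / fact k) * indicator {0..s} a \<partial>lborel) * (indicator {0..} s * h s) =
       ennreal (s^Suc k / fact (Suc k)) * indicator {0..} s * h s"
    proof (cases "0 \<le> s")
      case True
      then show ?thesis by (simp add: nn_pow[OF True])
    qed (simp add: indicator_def)
  qed
  finally show ?thesis by simp
qed



lemma u_meas_real:
  fixes u :: "real \<Rightarrow> real"
  assumes umono: "\<forall>x y. 0 < x \<longrightarrow> x \<le> y \<longrightarrow> u y \<le> u x"
  shows "(\<lambda>y. indicator {0<..} y * u y) \<in> borel_measurable borel"
proof -
  have "mono_on {0<..} (\<lambda>y. - u y)" using umono unfolding mono_on_def by auto
  then have "(\<lambda>y. - u y) \<in> borel_measurable (restrict_space borel {0<..})"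
    by (rule borel_measurable_mono_on_fnc)
  then have "(\<lambda>y. indicator {0<..} y *\<^sub>R (- u y)) \<in> borel_measurable borel"
    by (subst (asm) borel_measurable_restrict_space_iff) auto
  then have "(\<lambda>y. - (indicator {0<..} y *\<^sub>R (- u y))) \<in> borel_measurable borel" by measurable
  then show ?thesis by simp
qed

lemma u_meas_enn:
  fixes u :: "real \<Rightarrow> real"
  assumes umono: "\<forall>x y. 0 < x \<longrightarrow> x \<le> y \<longrightarrow> u y \<le> u x"
  shows "(\<lambda>y. indicator {0<..} y * ennreal (u y)) \<in> borel_measurable borel"
proof -
  have "(\<lambda>y. ennreal (indicator {0<..} y * u y)) \<in> borel_measurable borel"
    using u_meas_real[OF umono] by measurable
  moreover have "(\<lambda>y. ennreal (indicator {0<..} y * u y)) = (\<lambda>y. indicator {0<..} y * ennreal (u y))"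
    by (auto simp: indicator_def fun_eq_iff)
  ultimately show ?thesis by simp
qed

lemma u_fin:
  fixes u :: "real \<Rightarrow> real"
  assumes unonneg: "\<forall>x>0. 0 \<le> u x"
    and umono: "\<forall>x y. 0 < x \<longrightarrow> x \<le> y \<longrightarrow> u y \<le> u x"
    and t0: "0 < t0" and C: "0 < C" and beta: "0 < beta"
    and bound: "\<forall>s. 0 < s \<longrightarrow> s < t0 \<longrightarrow> u s \<le> C * s powr (beta - 1)"
  shows "(\<integral>\<^sup>+ y. indicator {0<..x} y * ennreal (u y) \<partial>lborel) < \<infinity>"
proof -
  define a where "a = t0 / 2"
  have a: "0 < a" "a < t0" using t0 by (auto simp: a_def)
  have pw: "(\<integral>\<^sup>+ y. ennreal (y powr (beta - 1)) * indicator {0..a} y \<partial>lborel) = ennreal (a powr (beta - 1 + 1) / (beta - 1 + 1))"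
    by (rule nn_integral_has_integral_lebesgue'[OF _ has_integral_powr_from_0]) (use a beta in auto)
  have "(\<integral>\<^sup>+ y. indicator {0<..x} y * ennreal (u y) \<partial>lborel) \<le>
     (\<integral>\<^sup>+ y. ennreal C * (ennreal (y powr (beta - 1)) * indicator {0..a} y) + ennreal (u a) * indicator {a..x} y \<partial>lborel)"
  proof (intro nn_integral_mono)
    fix y :: real
    show "indicator {0<..x} y * ennreal (u y) \<le> ennreal C * (ennreal (y powr (beta - 1)) * indicator {0..a} y) + ennreal (u a) * indicator {a..x} y"
    proof (cases "0 < y \<and> y \<le> x")
      case True
      show ?thesis
      proof (cases "y \<le> a")
        case True2: True
        have "u y \<le> C * y powr (beta - 1)" using bound True True2 a by auto
        then have "ennreal (u y) \<le> ennreal C * ennreal (y powr (beta - 1))"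
          using C by (simp add: ennreal_mult[symmetric])
        then show ?thesis using True True2 by (auto simp: indicator_def intro: order_trans[OF _ add_increasing2])
      next
        case False
        have "u y \<le> u a" using umono a False by auto
        then have "ennreal (u y) \<le> ennreal (u a)" by (rule ennreal_leI)
        then show ?thesis using True False by (auto simp: indicator_def intro: order_trans[OF _ add_increasing])
      qed
    qed (auto simp: indicator_def)
  qed
  also have "\<dots> = ennreal C * (\<integral>\<^sup>+ y. ennreal (y powr (beta - 1)) * indicator {0..a} y \<partial>lborel) + ennreal (u a) * (\<integral>\<^sup>+ y. indicator {a..x} y \<partial>lborel)"
    by (subst nn_integral_add) (auto simp: nn_integral_cmult)
  also have "\<dots> < \<infinity>"
    using pw by (auto simp: ennreal_mult_less_top ennreal_mult[symmetric] emeasure_lborel_Icc_eq)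
  finally show ?thesis .
qed

lemma u_meas_enn2:
  fixes u :: "real \<Rightarrow> real"
  assumes umono: "\<forall>x y. 0 < x \<longrightarrow> x \<le> y \<longrightarrow> u y \<le> u x"
  shows "(\<lambda>y. indicator {0<..x} y * ennreal (u y)) \<in> borel_measurable borel"
proof -
  have [measurable]: "(\<lambda>y. indicator {0<..} y * ennreal (u y)) \<in> borel_measurable borel"
    by (rule u_meas_enn[OF umono])
  have "(\<lambda>y. indicator {..x} y * (indicator {0<..} y * ennreal (u y))) \<in> borel_measurable borel" by measurable
  moreover have "(\<lambda>y. indicator {..x} y * (indicator {0<..} y * ennreal (u y))) = (\<lambda>y. indicator {0<..x} y * ennreal (u y))"
    by (auto simp: indicator_def fun_eq_iff)
  ultimately show ?thesis by simp
qed

lemma Q_small: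
  fixes u :: "real \<Rightarrow> real"
  assumes unonneg: "\<forall>x>0. 0 \<le> u x"
    and umono: "\<forall>x y. 0 < x \<longrightarrow> x \<le> y \<longrightarrow> u y \<le> u x"
    and fin: "(\<integral>\<^sup>+ y. indicator {0<..x} y * ennreal (u y) \<partial>lborel) < \<infinity>"
    and e: "0 < \<epsilon>"
  shows "\<exists>n::nat. (\<integral>\<^sup>+ y. indicator {0<..x} y * ennreal (u y) * ennreal (exp (- real n * y)) \<partial>lborel) < ennreal \<epsilon>"
proof -
  define f where "f = (\<lambda>(n::nat) y. indicator {0<..x} y * ennreal (u y) * ennreal (exp (- real n * y)))"
  have um2[measurable]: "(\<lambda>y. indicator {0<..x} y * ennreal (u y)) \<in> borel_measurable borel" by (rule u_meas_enn2[OF umono])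
  have fm: "\<And>n. f n \<in> borel_measurable lborel" unfolding f_def by measurable
  have dec: "\<And>n. AE y in lborel. f (Suc n) y \<le> f n y"
  proof (intro AE_I2)
    fix n y
    show "f (Suc n) y \<le> f n y"
    proof (cases "0 < y")
      case True
      have "exp (- real (Suc n) * y) \<le> exp (- real n * y)" using True by (simp add: algebra_simps)
      then have "ennreal (exp (- real (Suc n) * y)) \<le> ennreal (exp (- real n * y))" by (rule ennreal_leI)
      then show ?thesis unfolding f_def by (intro mult_left_mono) auto
    qed (simp add: f_def)
  qed
  have f0: "(\<integral>\<^sup>+ y. f 0 y \<partial>lborel) < \<infinity>" using fin by (simp add: f_def)
  have lim: "\<And>y. (INF n. f n y) = 0"
  proof -
    fix y :: real
    show "(INF n. f n y) = 0"
    proof (cases "0 < y \<and> y \<le> x")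
      case True
      have decs: "decseq (\<lambda>n. f n y)"
      proof (rule decseq_SucI)
        fix n
        have "exp (- real (Suc n) * y) \<le> exp (- real n * y)" using True by (simp add: algebra_simps)
        then have "ennreal (exp (- real (Suc n) * y)) \<le> ennreal (exp (- real n * y))" by (rule ennreal_leI)
        then show "f (Suc n) y \<le> f n y" unfolding f_def by (intro mult_left_mono) auto
      qed
      have "(\<lambda>n. exp (- y) ^ n) \<longlonglongrightarrow> 0"
        by (rule LIMSEQ_power_zero) (use True in auto)
      then have "(\<lambda>n. u y * exp (- y) ^ n) \<longlonglongrightarrow> u y * 0" by (intro tendsto_mult tendsto_const)
      then have "(\<lambda>n. ennreal (u y * exp (- y) ^ n)) \<longlonglongrightarrow> ennreal 0" by (intro tendsto_ennrealI) simp
      moreover have "\<And>n. ennreal (u y * exp (- y) ^ n) = f n y"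
        using True unonneg unfolding f_def by (simp add: ennreal_mult[symmetric] exp_of_nat_mult[symmetric] mult.commute)
      ultimately have "(\<lambda>n. f n y) \<longlonglongrightarrow> 0" by simp
      moreover have "(\<lambda>n. f n y) \<longlonglongrightarrow> (INF n. f n y)" by (rule LIMSEQ_INF[OF decs])
      ultimately show ?thesis using LIMSEQ_unique by blast
    qed (auto simp: f_def)
  qed
  have "(INF n. integral\<^sup>N lborel (f n)) = (\<integral>\<^sup>+ y. (INF n. f n y) \<partial>lborel)"
    by (rule nn_integral_monotone_convergence_INF_AE'[OF dec fm f0, symmetric])
  also have "\<dots> = 0" by (simp add: lim)
  finally have "(INF n. integral\<^sup>N lborel (f n)) < ennreal \<epsilon>" using e by simp
  then show ?thesis unfolding INF_less_iff f_def by auto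
qed

lemma nn_int_eq:
  fixes f :: "real \<Rightarrow> real"
  assumes m: "f \<in> borel_measurable lborel" and nn: "AE y in lborel. 0 \<le> f y"
    and fin: "(\<integral>\<^sup>+ y. ennreal (f y) \<partial>lborel) < \<infinity>"
  shows "(\<integral>\<^sup>+ y. ennreal (f y) \<partial>lborel) = ennreal (integral\<^sup>L lborel f) \<and> 0 \<le> integral\<^sup>L lborel f"
proof -
  have i: "integrable lborel f" by (rule integrableI_nonneg[OF m nn fin])
  show ?thesis using nn_integral_eq_integral[OF i nn] integral_nonneg_AE[OF nn] by simp
qed


declare zero_less_of_rat_iff[simp del]

locale subo =
  fixes M :: "'a measure" and sg :: "real \<Rightarrow> 'a \<Rightarrow> real" and Phi :: "real \<Rightarrow> real"
  assumes sub: "subordinator M sg Phi"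
begin

lemma prob: "prob_space M" using sub unfolding subordinator_def by auto

lemma sg_meas: "t \<ge> 0 \<Longrightarrow> sg t \<in> borel_measurable M" using sub unfolding subordinator_def by auto

lemma sg0: "\<omega> \<in> space M \<Longrightarrow> sg 0 \<omega> = 0" using sub unfolding subordinator_def by auto

lemma sg_mono: "\<omega> \<in> space M \<Longrightarrow> 0 \<le> s \<Longrightarrow> s \<le> t \<Longrightarrow> sg s \<omega> \<le> sg t \<omega>"
  using sub unfolding subordinator_def mono_on_def by auto

lemma sg_nonneg: "\<omega> \<in> space M \<Longrightarrow> 0 \<le> s \<Longrightarrow> 0 \<le> sg s \<omega>"
  using sg_mono[of \<omega> 0 s] sg0 by auto

lemma sg_rc: "\<omega> \<in> space M \<Longrightarrow> 0 \<le> t \<Longrightarrow> continuous (at_right t) (\<lambda>s. sg s \<omega>)"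
  using sub unfolding subordinator_def by auto

lemma sg_less_iff:
  assumes \<omega>: "\<omega> \<in> space M" and s: "0 \<le> s"
  shows "sg s \<omega> < x \<longleftrightarrow> (\<exists>r::rat. s < real_of_rat r \<and> sg (max 0 (real_of_rat r)) \<omega> < x)"
proof
  assume "sg s \<omega> < x"
  moreover have "((\<lambda>y. sg y \<omega>) \<longlongrightarrow> sg s \<omega>) (at_right s)"
    using sg_rc[OF \<omega> s] by (simp add: continuous_within)
  ultimately have "eventually (\<lambda>y. sg y \<omega> < x) (at_right s)"
    using order_tendstoD(2) by blast
  then obtain b where b: "b > s" "\<And>y. y > s \<Longrightarrow> y < b \<Longrightarrow> sg y \<omega> < x"
    unfolding eventually_at_right_field by auto
  obtain q where q: "q \<in> \<rat>" "s < q" "q < b" using Rats_dense_in_real[OF b(1)] by auto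
  then obtain r where r: "q = real_of_rat r" by (auto simp: Rats_def)
  have "max 0 q = q" using q s by auto
  then show "\<exists>r::rat. s < real_of_rat r \<and> sg (max 0 (real_of_rat r)) \<omega> < x"
    using b(2)[of q] q r by auto
next
  assume "\<exists>r::rat. s < real_of_rat r \<and> sg (max 0 (real_of_rat r)) \<omega> < x"
  then obtain r :: rat where "s < real_of_rat r" "sg (max 0 (real_of_rat r)) \<omega> < x" by auto
  moreover have "s \<le> max 0 (real_of_rat r)" using \<open>s < real_of_rat r\<close> by auto
  ultimately show "sg s \<omega> < x" using sg_mono[OF \<omega> s, of "max 0 (real_of_rat r)"] by linarith
qed

lemma sg_max_meas: "(\<lambda>s. sg (max 0 s)) q \<in> borel_measurable M"
  by (rule sg_meas) auto

lemma SG_meas[measurable]: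
  assumes [measurable]: "a \<in> borel_measurable K" "b \<in> K \<rightarrow>\<^sub>M M"
  shows "(\<lambda>z. sg (max 0 (a z)) (b z)) \<in> borel_measurable K"
  unfolding borel_measurable_iff_less
proof
  fix x
  have [measurable]: "\<And>q. (\<lambda>z. sg (max 0 q) (b z)) \<in> borel_measurable K"
    using measurable_compose[OF assms(2) sg_max_meas] by simp
  have "{w \<in> space K. sg (max 0 (a w)) (b w) < x} =
        {w \<in> space K. \<exists>r::rat. max 0 (a w) < real_of_rat r \<and> sg (max 0 (real_of_rat r)) (b w) < x}"
  proof (intro Collect_cong conj_cong refl)
    fix w assume "w \<in> space K"
    then have "b w \<in> space M" using measurable_space[OF assms(2)] by blast
    show "sg (max 0 (a w)) (b w) < x \<longleftrightarrow> (\<exists>r::rat. max 0 (a w) < real_of_rat r \<and> sg (max 0 (real_of_rat r)) (b w) < x)"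
      using sg_less_iff[OF \<open>b w \<in> space M\<close>, of "max 0 (a w)"] by simp
  qed
  also have "\<dots> \<in> sets K" by measurable
  finally show "{w \<in> space K. sg (max 0 (a w)) (b w) < x} \<in> sets K" .
qed

definition Bad :: "real \<Rightarrow> 'a set" where
  "Bad t = {\<omega>\<in>space M. \<forall>r::rat. 0 < real_of_rat r \<longrightarrow> sg (max 0 (real_of_rat r)) \<omega> \<le> t}"

lemma Bad_sets[measurable]: "Bad t \<in> sets M"
proof -
  have [measurable]: "\<And>q. sg (max 0 q) \<in> borel_measurable M" by (rule sg_meas) auto
  show ?thesis unfolding Bad_def by measurable
qed

lemma Bad_le: assumes "\<omega> \<in> Bad t" "0 \<le> s" shows "sg s \<omega> \<le> t"
proof -
  have \<omega>: "\<omega> \<in> space M" using assms unfolding Bad_def by auto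
  obtain q where q: "q \<in> \<rat>" "s < q" "q < s + 1" using Rats_dense_in_real[of s "s+1"] by auto
  then obtain r where r: "q = real_of_rat r" by (auto simp: Rats_def)
  have "0 < real_of_rat r" using q r assms by auto
  then have "sg (max 0 q) \<omega> \<le> t" using assms r unfolding Bad_def by blast
  moreover have "max 0 q = q" using q assms by auto
  ultimately show ?thesis using sg_mono[OF \<omega> assms(2), of q] q by auto
qed

lemma good_ne:
  assumes "\<omega> \<in> space M" "\<omega> \<notin> Bad t"
  shows "\<exists>r::rat. 0 < real_of_rat r \<and> t < sg (real_of_rat r) \<omega>"
  using assms unfolding Bad_def by (auto simp: not_le)

lemma inv_sub_nonneg:
  assumes "\<omega> \<in> space M" "\<omega> \<notin> Bad t"
  shows "0 \<le> inv_sub sg t \<omega>"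
proof -
  obtain r :: rat where "0 < real_of_rat r" "t < sg (real_of_rat r) \<omega>" using good_ne[OF assms] by auto
  then have "{y. 0 < y \<and> t < sg y \<omega>} \<noteq> {}" by blast
  then show ?thesis unfolding inv_sub_def by (intro cInf_greatest) auto
qed

lemma inv_sub_less_iff:
  assumes \<omega>: "\<omega> \<in> space M" "\<omega> \<notin> Bad t"
  shows "inv_sub sg t \<omega> < y \<longleftrightarrow> (\<exists>r::rat. 0 < real_of_rat r \<and> real_of_rat r < y \<and> t < sg (max 0 (real_of_rat r)) \<omega>)"
proof -
  let ?S = "{y. 0 < y \<and> t < sg y \<omega>}"
  obtain r0 :: rat where "0 < real_of_rat r0" "t < sg (real_of_rat r0) \<omega>" using good_ne[OF assms] by auto
  then have ne: "?S \<noteq> {}" by blast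
  have bdd: "bdd_below ?S" by (rule bdd_belowI[of _ 0]) auto
  show ?thesis
  proof
    assume "inv_sub sg t \<omega> < y"
    then obtain z where z: "z \<in> ?S" "z < y" using cInf_lessD[OF ne] unfolding inv_sub_def by blast
    obtain q where q: "q \<in> \<rat>" "z < q" "q < y" using Rats_dense_in_real[OF z(2)] by auto
    then obtain r where r: "q = real_of_rat r" by (auto simp: Rats_def)
    have "sg z \<omega> \<le> sg q \<omega>" using sg_mono[OF \<omega>(1), of z q] z q by auto
    then show "\<exists>r::rat. 0 < real_of_rat r \<and> real_of_rat r < y \<and> t < sg (max 0 (real_of_rat r)) \<omega>"
      using z q r by (intro exI[of _ r]) auto
  next
    assume "\<exists>r::rat. 0 < real_of_rat r \<and> real_of_rat r < y \<and> t < sg (max 0 (real_of_rat r)) \<omega>"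
    then obtain r :: rat where r: "0 < real_of_rat r" "real_of_rat r < y" "t < sg (max 0 (real_of_rat r)) \<omega>" by auto
    then have "real_of_rat r \<in> ?S" by auto
    then have "inv_sub sg t \<omega> \<le> real_of_rat r" unfolding inv_sub_def using bdd by (rule cInf_lower)
    then show "inv_sub sg t \<omega> < y" using r by auto
  qed
qed

lemma Bad_inv_sub: "\<omega> \<in> Bad t \<Longrightarrow> inv_sub sg t \<omega> = Inf {}"
  unfolding inv_sub_def using Bad_le by (metis (no_types, lifting) Collect_empty_eq less_eq_real_def not_le)

lemma inv_sub_meas[measurable]: "inv_sub sg t \<in> borel_measurable M"
  unfolding borel_measurable_iff_less
proof
  fix y
  have [measurable]: "\<And>q. sg (max 0 q) \<in> borel_measurable M" by (rule sg_meas) auto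
  have "{w \<in> space M. inv_sub sg t w < y} =
     {w \<in> space M. (w \<in> Bad t \<and> Inf {} < y) \<or> (\<exists>r::rat. 0 < real_of_rat r \<and> real_of_rat r < y \<and> t < sg (max 0 (real_of_rat r)) w)}"
  proof (intro Collect_cong conj_cong refl)
    fix w assume w: "w \<in> space M"
    show "inv_sub sg t w < y \<longleftrightarrow> (w \<in> Bad t \<and> Inf {} < y) \<or> (\<exists>r::rat. 0 < real_of_rat r \<and> real_of_rat r < y \<and> t < sg (max 0 (real_of_rat r)) w)"
    proof (cases "w \<in> Bad t")
      case True
      have "\<not> (\<exists>r::rat. 0 < real_of_rat r \<and> real_of_rat r < y \<and> t < sg (max 0 (real_of_rat r)) w)"
        using Bad_le[OF True] by (meson max.cobounded1 not_le)
      then show ?thesis using Bad_inv_sub[OF True] True by auto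
    next
      case False
      then show ?thesis using inv_sub_less_iff[OF w False] by auto
    qed
  qed
  also have "\<dots> \<in> sets M" by measurable
  finally show "{w \<in> space M. inv_sub sg t w < y} \<in> sets M" .
qed

lemma inv_sub_rel1:
  assumes \<omega>: "\<omega> \<in> space M" "\<omega> \<notin> Bad t" and s: "0 \<le> s" and t: "0 \<le> t" and l: "s < inv_sub sg t \<omega>"
  shows "sg s \<omega> \<le> t"
proof (cases "s = 0")
  case True then show ?thesis using sg0[OF \<omega>(1)] t by simp
next
  case False
  have bdd: "bdd_below {y. 0 < y \<and> t < sg y \<omega>}" by (rule bdd_belowI[of _ 0]) auto
  show ?thesis
  proof (rule ccontr)
    assume "\<not> sg s \<omega> \<le> t"
    then have "s \<in> {y. 0 < y \<and> t < sg y \<omega>}" using s False by auto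
    then have "inv_sub sg t \<omega> \<le> s" unfolding inv_sub_def using bdd by (rule cInf_lower)
    then show False using l by simp
  qed
qed

lemma inv_sub_rel2:
  assumes \<omega>: "\<omega> \<in> space M" "\<omega> \<notin> Bad t" and s: "0 \<le> s" and le: "sg s \<omega> \<le> t"
  shows "s \<le> inv_sub sg t \<omega>"
proof -
  obtain r0 :: rat where "0 < real_of_rat r0" "t < sg (real_of_rat r0) \<omega>" using good_ne[OF \<omega>] by auto
  then have ne: "{y. 0 < y \<and> t < sg y \<omega>} \<noteq> {}" by blast
  show ?thesis unfolding inv_sub_def
  proof (rule cInf_greatest[OF ne])
    fix y assume y: "y \<in> {y. 0 < y \<and> t < sg y \<omega>}"
    show "s \<le> y"
    proof (rule ccontr)
      assume "\<not> s \<le> y"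
      then have "sg y \<omega> \<le> sg s \<omega>" using sg_mono[OF \<omega>(1), of y s] y by auto
      then show False using y le by auto
    qed
  qed
qed

sublocale prob_space M by (rule prob)

definition G :: "nat \<Rightarrow> real \<Rightarrow> ennreal" where
  "G k t = (\<integral>\<^sup>+ s. ennreal (s^k / fact k) * indicator {0..} s * emeasure M {\<omega>\<in>space M. sg s \<omega> \<le> t} \<partial>lborel)"

lemma layer_fubini:
  fixes I :: "real \<Rightarrow> 'a \<Rightarrow> real set"
  assumes meas0: "(\<lambda>(s, \<omega>). indicator (I s \<omega>) s :: ennreal) \<in> borel_measurable (lborel \<Otimes>\<^sub>M M)"
  shows "(\<integral>\<^sup>+ \<omega>. (\<integral>\<^sup>+ s. ennreal (s^k / fact k) * indicator (I s \<omega>) s \<partial>lborel) \<partial>M) =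
         (\<integral>\<^sup>+ s. ennreal (s^k / fact k) * (\<integral>\<^sup>+ \<omega>. indicator (I s \<omega>) s \<partial>M) \<partial>lborel)"
proof -
  interpret pair_sigma_finite lborel M ..
  have meas: "(\<lambda>(s, \<omega>). ennreal (s^k / fact k) * indicator (I s \<omega>) s) \<in> borel_measurable (lborel \<Otimes>\<^sub>M M)"
    using meas0 by (simp add: split_beta')
  have "(\<integral>\<^sup>+ \<omega>. (\<integral>\<^sup>+ s. ennreal (s^k / fact k) * indicator (I s \<omega>) s \<partial>lborel) \<partial>M) =
        (\<integral>\<^sup>+ s. (\<integral>\<^sup>+ \<omega>. ennreal (s^k / fact k) * indicator (I s \<omega>) s \<partial>M) \<partial>lborel)"
    by (rule Fubini') (use meas in simp)
  also have "\<dots> = (\<integral>\<^sup>+ s. ennreal (s^k / fact k) * (\<integral>\<^sup>+ \<omega>. indicator (I s \<omega>) s \<partial>M) \<partial>lborel)"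
  proof (intro nn_integral_cong nn_integral_cmult)
    fix s :: real
    show "(\<lambda>\<omega>. indicator (I s \<omega>) s :: ennreal) \<in> borel_measurable M"
      using measurable_Pair2[OF meas0, of s] by simp
  qed
  finally show ?thesis .
qed

lemma sg_le_sets[measurable]: "0 \<le> s \<Longrightarrow> {\<omega>\<in>space M. sg s \<omega> \<le> t} \<in> sets M"
  using sg_meas[of s] by measurable

lemma moment_eq_G:
  assumes t: "0 \<le> t" and bad: "emeasure M (Bad t) = 0"
  shows "(\<integral>\<^sup>+\<omega>. ennreal (inv_sub sg t \<omega> ^ Suc k / fact (Suc k)) \<partial>M) = G k t"
proof -
  define L where "L = inv_sub sg t"
  have Lm[measurable]: "L \<in> borel_measurable M" unfolding L_def by measurable
  have AE: "AE \<omega> in M. \<omega> \<notin> Bad t" using bad by (intro AE_not_in) (auto simp: null_sets_def)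
  have AEs: "AE \<omega> in M. \<omega> \<in> space M" by (rule AE_space)
  have m1: "(\<lambda>(s, \<omega>). indicator {0..<L \<omega>} s :: ennreal) \<in> borel_measurable (lborel \<Otimes>\<^sub>M M)"
    unfolding indicator_def atLeastLessThan_iff split_beta' by measurable
  have m2: "(\<lambda>(s, \<omega>). indicator {0..L \<omega>} s :: ennreal) \<in> borel_measurable (lborel \<Otimes>\<^sub>M M)"
    unfolding indicator_def atLeastAtMost_iff split_beta' by measurable
  have e1: "(\<integral>\<^sup>+\<omega>. ennreal (L \<omega> ^ Suc k / fact (Suc k)) \<partial>M) =
      (\<integral>\<^sup>+\<omega>. (\<integral>\<^sup>+ s. ennreal (s^k / fact k) * indicator {0..<L \<omega>} s \<partial>lborel) \<partial>M)"
    using AE AEs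
  proof (intro nn_integral_cong_AE, eventually_elim)
    case (elim \<omega>)
    show ?case by (auto simp: L_def elim nn_pow' inv_sub_nonneg)
  qed
  have e2: "(\<integral>\<^sup>+\<omega>. ennreal (L \<omega> ^ Suc k / fact (Suc k)) \<partial>M) =
      (\<integral>\<^sup>+\<omega>. (\<integral>\<^sup>+ s. ennreal (s^k / fact k) * indicator {0..L \<omega>} s \<partial>lborel) \<partial>M)"
    using AE AEs
  proof (intro nn_integral_cong_AE, eventually_elim)
    case (elim \<omega>)
    show ?case by (auto simp: L_def elim nn_pow inv_sub_nonneg)
  qed
  have A: "(\<integral>\<^sup>+\<omega>. ennreal (L \<omega> ^ Suc k / fact (Suc k)) \<partial>M) \<le> G k t"
    unfolding e1 layer_fubini[OF m1] G_def
  proof (intro nn_integral_mono)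
    fix s :: real
    show "ennreal (s^k / fact k) * (\<integral>\<^sup>+ \<omega>. indicator {0..<L \<omega>} s \<partial>M)
      \<le> ennreal (s^k / fact k) * indicator {0..} s * emeasure M {\<omega>\<in>space M. sg s \<omega> \<le> t}"
    proof (cases "0 \<le> s")
      case True
      have "(\<integral>\<^sup>+ \<omega>. indicator {0..<L \<omega>} s \<partial>M) \<le> (\<integral>\<^sup>+ \<omega>. indicator {\<omega>\<in>space M. sg s \<omega> \<le> t} \<omega> \<partial>M)"
      proof (intro nn_integral_mono)
        fix \<omega> assume \<omega>: "\<omega> \<in> space M"
        show "indicator {0..<L \<omega>} s \<le> (indicator {\<omega>\<in>space M. sg s \<omega> \<le> t} \<omega> :: ennreal)"
        proof (cases "s < L \<omega>")
          case True
          have "sg s \<omega> \<le> t"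
          proof (cases "\<omega> \<in> Bad t")
            case True then show ?thesis using Bad_le \<open>0 \<le> s\<close> by auto
          next
            case False then show ?thesis using inv_sub_rel1[OF \<omega> False \<open>0 \<le> s\<close> t] True by (auto simp: L_def)
          qed
          then show ?thesis using \<omega> by (auto simp: indicator_def)
        qed (auto simp: indicator_def)
      qed
      also have "\<dots> = emeasure M {\<omega>\<in>space M. sg s \<omega> \<le> t}" using True by (intro nn_integral_indicator) measurable
      finally show ?thesis using True by (auto intro: mult_left_mono)
    qed (auto simp: indicator_def)
  qed
  have B: "G k t \<le> (\<integral>\<^sup>+\<omega>. ennreal (L \<omega> ^ Suc k / fact (Suc k)) \<partial>M)"
    unfolding e2 layer_fubini[OF m2] G_def
  proof (intro nn_integral_mono)
    fix s :: real
    show "ennreal (s^k / fact k) * indicator {0..} s * emeasure M {\<omega>\<in>space M. sg s \<omega> \<le> t}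
       \<le> ennreal (s^k / fact k) * (\<integral>\<^sup>+ \<omega>. indicator {0..L \<omega>} s \<partial>M)"
    proof (cases "0 \<le> s")
      case True
      have "emeasure M {\<omega>\<in>space M. sg s \<omega> \<le> t} = (\<integral>\<^sup>+ \<omega>. indicator {\<omega>\<in>space M. sg s \<omega> \<le> t} \<omega> \<partial>M)"
        using True by (intro nn_integral_indicator[symmetric]) measurable
      also have "\<dots> \<le> (\<integral>\<^sup>+ \<omega>. indicator {0..L \<omega>} s \<partial>M)"
        using AE
      proof (intro nn_integral_mono_AE, eventually_elim)
        case (elim \<omega>)
        show ?case
        proof (cases "\<omega> \<in> space M \<and> sg s \<omega> \<le> t")
          case True2: True
          then have "s \<le> L \<omega>" using inv_sub_rel2[of \<omega> t s] elim True by (auto simp: L_def)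
          then show ?thesis using True by (auto simp: indicator_def)
        qed (auto simp: indicator_def)
      qed
      finally show ?thesis using True by (auto intro: mult_left_mono)
    qed (auto simp: indicator_def)
  qed
  from A B show ?thesis unfolding L_def by (rule antisym)
qed

lemma indep_two:
  assumes "indep_vars (\<lambda>_. borel) X {..<2::nat}"
  shows "indep_var borel (X 0) borel (X 1)"
  unfolding indep_var_eq
proof
  have rv: "\<And>i. i < 2 \<Longrightarrow> random_variable borel (X i)" using assms unfolding indep_vars_def by auto
  then show "random_variable borel (X 0) \<and> random_variable borel (X 1)" by auto
  have IS: "indep_sets (\<lambda>i. sigma_sets (space M) {X i -` A \<inter> space M |A. A \<in> sets borel}) {..<2}"
    using assms unfolding indep_vars_def by auto
  have ev: "\<And>i. i < 2 \<Longrightarrow> sigma_sets (space M) {X i -` A \<inter> space M |A. A \<in> sets borel} \<subseteq> events"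
    using IS unfolding indep_sets_def by auto
  show "indep_set (sigma_sets (space M) {X 0 -` A \<inter> space M |A. A \<in> sets borel})
                  (sigma_sets (space M) {X 1 -` A \<inter> space M |A. A \<in> sets borel})"
    unfolding indep_sets2_eq
  proof (intro conjI ballI)
    show "sigma_sets (space M) {X 0 -` A \<inter> space M |A. A \<in> sets borel} \<subseteq> events" using ev[of 0] by simp
    show "sigma_sets (space M) {X 1 -` A \<inter> space M |A. A \<in> sets borel} \<subseteq> events" using ev[of 1] by simp
    fix a b assume a: "a \<in> sigma_sets (space M) {X 0 -` A \<inter> space M |A. A \<in> sets borel}"
      and b: "b \<in> sigma_sets (space M) {X 1 -` A \<inter> space M |A. A \<in> sets borel}"
    have "prob (\<Inter>j\<in>{0::nat,1}. (\<lambda>j. if j = 0 then a else b) j) = (\<Prod>j\<in>{0::nat,1}. prob ((\<lambda>j. if j = 0 then a else b) j))"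
      using indep_setsD[OF IS, of "{0::nat,1}" "\<lambda>j. if j = 0 then a else b"] a b by auto
    then show "prob (a \<inter> b) = prob a * prob b" by (simp add: Int_commute)
  qed
qed

lemma conv_step:
  assumes a: "0 \<le> a" and b: "0 \<le> b"
  shows "emeasure M {\<omega>\<in>space M. sg (a+b) \<omega> \<le> x} =
    (\<integral>\<^sup>+ y. emeasure M {\<omega>\<in>space M. sg a \<omega> \<le> x - y} \<partial>distr M borel (sg b))"
proof -
  define ts :: "nat \<Rightarrow> real" where "ts = (\<lambda>i. if i = 0 then 0 else if i = 1 then a else a + b)"
  have H: "\<forall>n (ts::nat\<Rightarrow>real). 0 \<le> ts 0 \<and> (\<forall>i<n. ts i \<le> ts (Suc i)) \<longrightarrow>
        indep_vars (\<lambda>_. borel) (\<lambda>i \<omega>. sg (ts (Suc i)) \<omega> - sg (ts i) \<omega>) {..<n}"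
    using sub unfolding subordinator_def by blast
  have "\<forall>i<2. ts i \<le> ts (Suc i)"
  proof (intro allI impI)
    fix i :: nat assume "i < 2"
    then have "i = 0 \<or> i = 1" by auto
    then show "ts i \<le> ts (Suc i)" using a b by (auto simp: ts_def)
  qed
  moreover have "0 \<le> ts 0" by (simp add: ts_def)
  ultimately have "indep_vars (\<lambda>_. borel) (\<lambda>i \<omega>. sg (ts (Suc i)) \<omega> - sg (ts i) \<omega>) {..<2}"
    using H by blast
  from indep_two[OF this]
  have "indep_var borel (\<lambda>\<omega>. sg a \<omega> - sg 0 \<omega>) borel (\<lambda>\<omega>. sg (a+b) \<omega> - sg a \<omega>)"
    by (simp add: ts_def)
  then have ind: "indep_var borel (\<lambda>\<omega>. sg a \<omega> - sg 0 \<omega>) borel (\<lambda>\<omega>. sg (a+b) \<omega> - sg a \<omega>)" .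
  define D where "D = (\<lambda>\<omega>. sg (a+b) \<omega> - sg a \<omega>)"
  have [measurable]: "sg a \<in> borel_measurable M" "D \<in> borel_measurable M" "sg (a+b) \<in> borel_measurable M"
    using sg_meas a b unfolding D_def by auto
  have m0[measurable]: "sg 0 \<in> borel_measurable M" using sg_meas by auto
  have prod0: "distr M borel (\<lambda>\<omega>. sg a \<omega> - sg 0 \<omega>) \<Otimes>\<^sub>M distr M borel D = distr M (borel \<Otimes>\<^sub>M borel) (\<lambda>\<omega>. (sg a \<omega> - sg 0 \<omega>, D \<omega>))"
    using ind[folded D_def] unfolding indep_var_distribution_eq by auto
  have dA: "distr M borel (\<lambda>\<omega>. sg a \<omega> - sg 0 \<omega>) = distr M borel (sg a)"
    by (rule distr_cong) (auto simp: sg0)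
  have dJ: "distr M (borel \<Otimes>\<^sub>M borel) (\<lambda>\<omega>. (sg a \<omega> - sg 0 \<omega>, D \<omega>)) = distr M (borel \<Otimes>\<^sub>M borel) (\<lambda>\<omega>. (sg a \<omega>, D \<omega>))"
    by (rule distr_cong) (auto simp: sg0)
  have prod: "distr M borel (sg a) \<Otimes>\<^sub>M distr M borel D = distr M (borel \<Otimes>\<^sub>M borel) (\<lambda>\<omega>. (sg a \<omega>, D \<omega>))"
    using prod0 dA dJ by simp
  have dD: "distr M borel D = distr M borel (sg b)"
    using sub a b unfolding subordinator_def D_def by auto
  interpret X: prob_space "distr M borel (sg a)" by (rule prob_space_distr) simp
  interpret Y: prob_space "distr M borel D" by (rule prob_space_distr) simp
  interpret XY: pair_sigma_finite "distr M borel (sg a)" "distr M borel D" ..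
  have "{p :: real \<times> real. fst p + snd p \<le> x} = {p \<in> space (borel \<Otimes>\<^sub>M borel). fst p + snd p \<le> x}"
    by (auto simp: space_pair_measure)
  also have "\<dots> \<in> sets (borel \<Otimes>\<^sub>M borel)" by measurable
  finally have S: "{p :: real \<times> real. fst p + snd p \<le> x} \<in> sets (borel \<Otimes>\<^sub>M borel)" .
  have "emeasure M {\<omega>\<in>space M. sg (a+b) \<omega> \<le> x} = emeasure (distr M (borel \<Otimes>\<^sub>M borel) (\<lambda>\<omega>. (sg a \<omega>, D \<omega>))) {p. fst p + snd p \<le> x}"
    using S by (subst emeasure_distr) (auto simp: D_def space_pair_measure intro!: arg_cong[where f="emeasure M"])
  also have "\<dots> = emeasure (distr M borel (sg a) \<Otimes>\<^sub>M distr M borel D) {p. fst p + snd p \<le> x}"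
    by (simp add: prod)
  also have "\<dots> = (\<integral>\<^sup>+ y. emeasure (distr M borel (sg a)) ((\<lambda>p. (p, y)) -` {p. fst p + snd p \<le> x}) \<partial>distr M borel D)"
    using S by (intro XY.emeasure_pair_measure_alt2) simp
  also have "\<dots> = (\<integral>\<^sup>+ y. emeasure M {\<omega>\<in>space M. sg a \<omega> \<le> x - y} \<partial>distr M borel D)"
  proof (intro nn_integral_cong)
    fix y
    have "(\<lambda>p. (p, y)) -` {p. fst p + snd p \<le> x} = {..x - y}" by auto
    then show "emeasure (distr M borel (sg a)) ((\<lambda>p. (p, y)) -` {p. fst p + snd p \<le> x}) = emeasure M {\<omega>\<in>space M. sg a \<omega> \<le> x - y}"
      by (subst emeasure_distr) (auto intro!: arg_cong[where f="emeasure M"])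
  qed
  finally show ?thesis by (simp add: dD)
qed

lemma pot_fun:
  assumes pot: "potential_density M sg u"
    and um[measurable]: "(\<lambda>y. indicator {0<..} y * ennreal (u y)) \<in> borel_measurable borel"
    and g[measurable]: "g \<in> borel_measurable borel"
  shows "(\<integral>\<^sup>+ b. indicator {0..} b * (\<integral>\<^sup>+\<omega>. g (sg b \<omega>) \<partial>M) \<partial>lborel)
       = (\<integral>\<^sup>+ y. indicator {0<..} y * ennreal (u y) * g y \<partial>lborel)"
proof -
  define SG where "SG = (\<lambda>p::real \<times> 'a. sg (max 0 (fst p)) (snd p))"
  have SGm[measurable]: "SG \<in> borel_measurable (lborel \<Otimes>\<^sub>M M)" unfolding SG_def by measurable
  define N where "N = density (lborel \<Otimes>\<^sub>M M) (\<lambda>p::real\<times>'a. indicator {0::real..} (fst p))"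
  define NU where "NU = distr N (borel :: real measure) SG"
  define DU where "DU = density lborel (\<lambda>y::real. indicator {0<..} y * ennreal (u y))"
  have sN: "sets N = sets (lborel \<Otimes>\<^sub>M M)" unfolding N_def by simp
  have SGN[measurable]: "SG \<in> borel_measurable N" using SGm by (simp add: N_def)
  have fubini: "\<And>f. f \<in> borel_measurable (lborel \<Otimes>\<^sub>M M) \<Longrightarrow>
     (\<integral>\<^sup>+ b. (\<integral>\<^sup>+\<omega>. f (b, \<omega>) \<partial>M) \<partial>lborel) = integral\<^sup>N (lborel \<Otimes>\<^sub>M M) f"
    by (rule nn_integral_fst)
  have intNU: "\<And>h. h \<in> borel_measurable borel \<Longrightarrow>
      (\<integral>\<^sup>+ z. h z \<partial>NU) = (\<integral>\<^sup>+ b. indicator {0..} b * (\<integral>\<^sup>+\<omega>. h (sg b \<omega>) \<partial>M) \<partial>lborel)"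
  proof -
    fix h :: "real \<Rightarrow> ennreal" assume [measurable]: "h \<in> borel_measurable borel"
    have "(\<integral>\<^sup>+ z. h z \<partial>NU) = (\<integral>\<^sup>+ p. h (SG p) \<partial>N)"
      unfolding NU_def by (rule nn_integral_distr) measurable
    also have "\<dots> = (\<integral>\<^sup>+ p. indicator {0..} (fst p) * h (SG p) \<partial>(lborel \<Otimes>\<^sub>M M))"
      unfolding N_def by (rule nn_integral_density) measurable
    also have "\<dots> = (\<integral>\<^sup>+ b. (\<integral>\<^sup>+\<omega>. indicator {0..} b * h (SG (b, \<omega>)) \<partial>M) \<partial>lborel)"
    proof -
      have "(\<lambda>p. indicator {0..} (fst p) * h (SG p)) \<in> borel_measurable (lborel \<Otimes>\<^sub>M M)" by measurable
      from fubini[OF this] show ?thesis by simp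
    qed
    also have "\<dots> = (\<integral>\<^sup>+ b. indicator {0..} b * (\<integral>\<^sup>+\<omega>. h (sg b \<omega>) \<partial>M) \<partial>lborel)"
    proof (intro nn_integral_cong)
      fix b :: real
      show "(\<integral>\<^sup>+\<omega>. indicator {0..} b * h (SG (b, \<omega>)) \<partial>M) = indicator {0..} b * (\<integral>\<^sup>+\<omega>. h (sg b \<omega>) \<partial>M)"
      proof (cases "0 \<le> b")
        case True
        then have "sg b \<in> borel_measurable M" by (rule sg_meas)
        then show ?thesis using True by (subst nn_integral_cmult[symmetric]) (auto simp: SG_def)
      qed auto
    qed
    finally show "(\<integral>\<^sup>+ z. h z \<partial>NU) = (\<integral>\<^sup>+ b. indicator {0..} b * (\<integral>\<^sup>+\<omega>. h (sg b \<omega>) \<partial>M) \<partial>lborel)" .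
  qed
  have eq: "NU = DU"
  proof (rule measure_eqI)
    show "sets NU = sets DU" unfolding NU_def DU_def by simp
    fix A assume "A \<in> sets NU"
    then have A[measurable]: "A \<in> sets borel" unfolding NU_def by simp
    have "emeasure NU A = (\<integral>\<^sup>+ z. indicator A z \<partial>NU)"
      using A by (simp add: NU_def)
    also have "\<dots> = (\<integral>\<^sup>+ b. indicator {0..} b * (\<integral>\<^sup>+\<omega>. indicator A (sg b \<omega>) \<partial>M) \<partial>lborel)"
      by (rule intNU) measurable
    also have "\<dots> = (\<integral>\<^sup>+ b. indicator {0..} b * emeasure M {\<omega>\<in>space M. sg b \<omega> \<in> A} \<partial>lborel)"
    proof (intro nn_integral_cong)
      fix b :: real
      show "indicator {0..} b * (\<integral>\<^sup>+\<omega>. indicator A (sg b \<omega>) \<partial>M) = indicator {0..} b * emeasure M {\<omega>\<in>space M. sg b \<omega> \<in> A}"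
      proof (cases "0 \<le> b")
        case True
        then have [measurable]: "sg b \<in> borel_measurable M" by (rule sg_meas)
        have "(\<integral>\<^sup>+\<omega>. indicator A (sg b \<omega>) \<partial>M) = (\<integral>\<^sup>+\<omega>. indicator {\<omega>\<in>space M. sg b \<omega> \<in> A} \<omega> \<partial>M)"
          by (intro nn_integral_cong) (auto simp: indicator_def)
        also have "\<dots> = emeasure M {\<omega>\<in>space M. sg b \<omega> \<in> A}" by (intro nn_integral_indicator) measurable
        finally show ?thesis by simp
      qed auto
    qed
    also have "\<dots> = (\<integral>\<^sup>+ x. indicator (A \<inter> {0<..}) x * ennreal (u x) \<partial>lborel)"
      using pot A unfolding potential_density_def by auto
    also have "\<dots> = emeasure DU A"
    proof -
      have "emeasure DU A = (\<integral>\<^sup>+ x. indicator {0<..} x * ennreal (u x) * indicator A x \<partial>lborel)"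
        unfolding DU_def by (rule emeasure_density) (use um A in auto)
      also have "\<dots> = (\<integral>\<^sup>+ x. indicator (A \<inter> {0<..}) x * ennreal (u x) \<partial>lborel)"
        by (intro nn_integral_cong) (auto simp: indicator_def)
      finally show ?thesis by simp
    qed
    finally show "emeasure NU A = emeasure DU A" .
  qed
  have "(\<integral>\<^sup>+ b. indicator {0..} b * (\<integral>\<^sup>+\<omega>. g (sg b \<omega>) \<partial>M) \<partial>lborel) = (\<integral>\<^sup>+ z. g z \<partial>NU)"
    by (rule intNU[symmetric]) measurable
  also have "\<dots> = (\<integral>\<^sup>+ z. g z \<partial>DU)" by (simp add: eq)
  also have "\<dots> = (\<integral>\<^sup>+ y. indicator {0<..} y * ennreal (u y) * g y \<partial>lborel)"
    unfolding DU_def by (rule nn_integral_density) measurable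
  finally show ?thesis .
qed

definition P2 :: "real \<Rightarrow> real \<Rightarrow> ennreal" where
  "P2 s x = emeasure M {\<omega>\<in>space M. sg (max 0 s) \<omega> \<le> x}"

lemma P2_int: "P2 s x = (\<integral>\<^sup>+\<omega>. of_bool (sg (max 0 s) \<omega> \<le> x) \<partial>M)"
proof -
  have [measurable]: "sg (max 0 s) \<in> borel_measurable M" by (rule sg_meas) auto
  have "P2 s x = (\<integral>\<^sup>+\<omega>. indicator {\<omega>\<in>space M. sg (max 0 s) \<omega> \<le> x} \<omega> \<partial>M)"
    unfolding P2_def by (rule nn_integral_indicator[symmetric]) measurable
  also have "\<dots> = (\<integral>\<^sup>+\<omega>. of_bool (sg (max 0 s) \<omega> \<le> x) \<partial>M)"
    by (intro nn_integral_cong) (auto simp: indicator_def)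
  finally show ?thesis .
qed

lemma P2_meas[measurable]:
  assumes [measurable]: "a \<in> borel_measurable K" "c \<in> borel_measurable K"
  shows "(\<lambda>z. P2 (a z) (c z)) \<in> borel_measurable K"
  unfolding P2_int by measurable

lemma G_alt: "G k x = (\<integral>\<^sup>+ s. ennreal (s^k / fact k) * indicator {0..} s * P2 s x \<partial>lborel)"
  unfolding G_def P2_def by (intro nn_integral_cong) (auto simp: indicator_def)

lemma G_meas[measurable]:
  assumes [measurable]: "c \<in> borel_measurable K"
  shows "(\<lambda>z. G k (c z)) \<in> borel_measurable K"
proof -
  have "(\<lambda>z. \<integral>\<^sup>+ s. ennreal (s^k / fact k) * indicator {0..} s * P2 s (c z) \<partial>lborel) \<in> borel_measurable K"
    by measurable
  then show ?thesis unfolding G_alt .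
qed

lemma G_rec:
  assumes pot: "potential_density M sg u"
    and um[measurable]: "(\<lambda>y. indicator {0<..} y * ennreal (u y)) \<in> borel_measurable borel"
  shows "G (Suc k) x = (\<integral>\<^sup>+ y. indicator {0<..} y * ennreal (u y) * G k (x - y) \<partial>lborel)"
proof -
  have "G (Suc k) x = (\<integral>\<^sup>+ s. ennreal (s^Suc k / fact (Suc k)) * indicator {0..} s * P2 s x \<partial>lborel)"
    by (rule G_alt)
  also have "\<dots> = (\<integral>\<^sup>+ b. indicator {0..} b * (\<integral>\<^sup>+ a. ennreal (a^k / fact k) * indicator {0..} a * P2 (a + b) x \<partial>lborel) \<partial>lborel)"
    by (rule simplex) measurable
  also have "\<dots> = (\<integral>\<^sup>+ b. indicator {0..} b * (\<integral>\<^sup>+\<omega>. G k (x - sg b \<omega>) \<partial>M) \<partial>lborel)"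
  proof (intro nn_integral_cong)
    fix b :: real
    show "indicator {0..} b * (\<integral>\<^sup>+ a. ennreal (a^k / fact k) * indicator {0..} a * P2 (a + b) x \<partial>lborel)
      = indicator {0..} b * (\<integral>\<^sup>+\<omega>. G k (x - sg b \<omega>) \<partial>M)"
    proof (cases "0 \<le> b")
      case b: True
      have sgb[measurable]: "sg b \<in> borel_measurable M" using b by (rule sg_meas)
      interpret Y: prob_space "distr M borel (sg b)" by (rule prob_space_distr) simp
      interpret PY: pair_sigma_finite lborel "distr M borel (sg b)" ..
      have "(\<integral>\<^sup>+ a. ennreal (a^k / fact k) * indicator {0..} a * P2 (a + b) x \<partial>lborel)
         = (\<integral>\<^sup>+ a. ennreal (a^k / fact k) * indicator {0..} a * (\<integral>\<^sup>+ y. P2 a (x - y) \<partial>distr M borel (sg b)) \<partial>lborel)"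
      proof (intro nn_integral_cong)
        fix a :: real
        show "ennreal (a^k / fact k) * indicator {0..} a * P2 (a + b) x =
          ennreal (a^k / fact k) * indicator {0..} a * (\<integral>\<^sup>+ y. P2 a (x - y) \<partial>distr M borel (sg b))"
        proof (cases "0 \<le> a")
          case a: True
          have "P2 (a + b) x = (\<integral>\<^sup>+ y. P2 a (x - y) \<partial>distr M borel (sg b))"
            using conv_step[OF a b, of x] a b by (simp add: P2_def)
          then show ?thesis by simp
        qed simp
      qed
      also have "\<dots> = (\<integral>\<^sup>+ a. (\<integral>\<^sup>+ y. ennreal (a^k / fact k) * indicator {0..} a * P2 a (x - y) \<partial>distr M borel (sg b)) \<partial>lborel)"
        by (intro nn_integral_cong nn_integral_cmult[symmetric]) measurable
      also have "\<dots> = (\<integral>\<^sup>+ y. (\<integral>\<^sup>+ a. ennreal (a^k / fact k) * indicator {0..} a * P2 a (x - y) \<partial>lborel) \<partial>distr M borel (sg b))"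
        by (rule PY.Fubini'[symmetric]) measurable
      also have "\<dots> = (\<integral>\<^sup>+ y. G k (x - y) \<partial>distr M borel (sg b))"
        by (simp add: G_alt)
      also have "\<dots> = (\<integral>\<^sup>+\<omega>. G k (x - sg b \<omega>) \<partial>M)"
        by (rule nn_integral_distr) measurable
      finally show ?thesis by simp
    qed simp
  qed
  also have "\<dots> = (\<integral>\<^sup>+ y. indicator {0<..} y * ennreal (u y) * G k (x - y) \<partial>lborel)"
    by (rule pot_fun[OF pot um]) measurable
  finally show ?thesis .
qed

lemma G_neg: "x < 0 \<Longrightarrow> G k x = 0"
proof -
  assume x: "x < 0"
  have "\<And>s. ennreal (s^k / fact k) * indicator {0..} s * emeasure M {\<omega>\<in>space M. sg s \<omega> \<le> x} = 0"
  proof -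
    fix s :: real
    show "ennreal (s^k / fact k) * indicator {0..} s * emeasure M {\<omega>\<in>space M. sg s \<omega> \<le> x} = 0"
    proof (cases "0 \<le> s")
      case True
      then have "{\<omega>\<in>space M. sg s \<omega> \<le> x} = {}" using sg_nonneg[of _ s] x by force
      then have "emeasure M {\<omega>\<in>space M. sg s \<omega> \<le> x} = 0" by (metis emeasure_empty)
      then show ?thesis by simp
    qed simp
  qed
  then show ?thesis unfolding G_def by (simp del: mult_eq_0_iff)
qed

lemma G0:
  assumes pot: "potential_density M sg u"
  shows "G 0 x = (\<integral>\<^sup>+ y. indicator {0<..x} y * ennreal (u y) \<partial>lborel)"
proof -
  have "G 0 x = (\<integral>\<^sup>+ s. indicator {0..} s * emeasure M {\<omega>\<in>space M. sg s \<omega> \<in> {..x}} \<partial>lborel)"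
    unfolding G_def by simp
  also have "\<dots> = (\<integral>\<^sup>+ y. indicator ({..x} \<inter> {0<..}) y * ennreal (u y) \<partial>lborel)"
    using pot[unfolded potential_density_def, rule_format, of "{..x}"] by simp
  also have "\<dots> = (\<integral>\<^sup>+ y. indicator {0<..x} y * ennreal (u y) \<partial>lborel)"
    by (intro nn_integral_cong) (auto simp: indicator_def)
  finally show ?thesis .
qed

lemma G_bound:
  assumes pot: "potential_density M sg u"
    and umono: "\<forall>x y. 0 < x \<longrightarrow> x \<le> y \<longrightarrow> u y \<le> u x"
    and unonneg: "\<forall>x>0. 0 \<le> u x"
    and th: "0 \<le> \<theta>"
  shows "\<forall>z\<le>x. G k z \<le> ennreal (exp (\<theta> * z)) * (\<integral>\<^sup>+ y. indicator {0<..x} y * ennreal (u y) * ennreal (exp (- \<theta> * y)) \<partial>lborel) ^ Suc k"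
proof (induction k)
  define Q where "Q = (\<integral>\<^sup>+ y. indicator {0<..x} y * ennreal (u y) * ennreal (exp (- \<theta> * y)) \<partial>lborel)"
  have um[measurable]: "(\<lambda>y. indicator {0<..} y * ennreal (u y)) \<in> borel_measurable borel" by (rule u_meas_enn[OF umono])
  have um2[measurable]: "(\<lambda>y. indicator {0<..x} y * ennreal (u y)) \<in> borel_measurable borel" by (rule u_meas_enn2[OF umono])
  case 0
  show ?case
  proof (intro allI impI)
    fix z assume z: "z \<le> x"
    have "G 0 z = (\<integral>\<^sup>+ y. indicator {0<..z} y * ennreal (u y) \<partial>lborel)" by (rule G0[OF pot])
    also have "\<dots> \<le> (\<integral>\<^sup>+ y. ennreal (exp (\<theta> * z)) * (indicator {0<..x} y * ennreal (u y) * ennreal (exp (- \<theta> * y))) \<partial>lborel)"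
    proof (intro nn_integral_mono)
      fix y :: real
      show "indicator {0<..z} y * ennreal (u y) \<le> ennreal (exp (\<theta> * z)) * (indicator {0<..x} y * ennreal (u y) * ennreal (exp (- \<theta> * y)))"
      proof (cases "0 < y \<and> y \<le> z")
        case True
        have e: "exp (\<theta> * z) * exp (- \<theta> * y) = exp (\<theta> * (z - y))"
          by (simp only: exp_add[symmetric] right_diff_distrib) simp
        have "0 \<le> \<theta> * (z - y)" using th True by simp
        then have "1 \<le> exp (\<theta> * z) * exp (- \<theta> * y)" unfolding e by simp
        then have "u y * 1 \<le> u y * (exp (\<theta> * z) * exp (- \<theta> * y))"
          by (rule mult_left_mono) (use unonneg True in auto)
        then have "u y \<le> exp (\<theta> * z) * (u y * exp (- \<theta> * y))" by (simp add: ac_simps)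
        then have "ennreal (u y) \<le> ennreal (exp (\<theta> * z) * (u y * exp (- \<theta> * y)))" by (rule ennreal_leI)
        then show ?thesis using True z unonneg by (simp add: indicator_def ennreal_mult)
      qed (auto simp: indicator_def)
    qed
    also have "\<dots> = ennreal (exp (\<theta> * z)) * Q"
      unfolding Q_def by (rule nn_integral_cmult) measurable
    finally have "G 0 z \<le> ennreal (exp (\<theta> * z)) * Q ^ Suc 0" by simp
    then show "G 0 z \<le> ennreal (exp (\<theta> * z)) * (\<integral>\<^sup>+ y. indicator {0<..x} y * ennreal (u y) * ennreal (exp (- \<theta> * y)) \<partial>lborel) ^ Suc 0" unfolding Q_def .
  qed
next
  define Q where "Q = (\<integral>\<^sup>+ y. indicator {0<..x} y * ennreal (u y) * ennreal (exp (- \<theta> * y)) \<partial>lborel)"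
  have um[measurable]: "(\<lambda>y. indicator {0<..} y * ennreal (u y)) \<in> borel_measurable borel" by (rule u_meas_enn[OF umono])
  have um2[measurable]: "(\<lambda>y. indicator {0<..x} y * ennreal (u y)) \<in> borel_measurable borel" by (rule u_meas_enn2[OF umono])
  case (Suc k)
  then have IH: "\<And>z. z \<le> x \<Longrightarrow> G k z \<le> ennreal (exp (\<theta> * z)) * Q ^ Suc k" unfolding Q_def by auto
  show ?case
  proof (intro allI impI)
    fix z assume z: "z \<le> x"
    have "G (Suc k) z = (\<integral>\<^sup>+ y. indicator {0<..} y * ennreal (u y) * G k (z - y) \<partial>lborel)"
      by (rule G_rec[OF pot um])
    also have "\<dots> \<le> (\<integral>\<^sup>+ y. (indicator {0<..x} y * ennreal (u y) * ennreal (exp (- \<theta> * y))) * (ennreal (exp (\<theta> * z)) * Q ^ Suc k) \<partial>lborel)"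
    proof (intro nn_integral_mono)
      fix y :: real
      show "indicator {0<..} y * ennreal (u y) * G k (z - y) \<le> (indicator {0<..x} y * ennreal (u y) * ennreal (exp (- \<theta> * y))) * (ennreal (exp (\<theta> * z)) * Q ^ Suc k)"
      proof (cases "0 < y \<and> y \<le> z")
        case True
        have "G k (z - y) \<le> ennreal (exp (\<theta> * (z - y))) * Q ^ Suc k" using IH[of "z - y"] True z by auto
        also have "ennreal (exp (\<theta> * (z - y))) = ennreal (exp (- \<theta> * y)) * ennreal (exp (\<theta> * z))"
          by (simp add: ennreal_mult[symmetric] exp_add[symmetric] algebra_simps)
        finally have "G k (z - y) \<le> ennreal (exp (- \<theta> * y)) * ennreal (exp (\<theta> * z)) * Q ^ Suc k" .
        then have "ennreal (u y) * G k (z - y) \<le> ennreal (u y) * (ennreal (exp (- \<theta> * y)) * ennreal (exp (\<theta> * z)) * Q ^ Suc k)"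
          by (rule mult_left_mono) simp
        then show ?thesis using True z by (simp add: indicator_def ac_simps)
      next
        case False
        show ?thesis
        proof (cases "0 < y")
          case True
          then have "z - y < 0" using False by auto
          then show ?thesis using G_neg by simp
        qed (simp add: indicator_def)
      qed
    qed
    also have "\<dots> = Q * (ennreal (exp (\<theta> * z)) * Q ^ Suc k)"
      unfolding Q_def by (rule nn_integral_multc) measurable
    finally have "G (Suc k) z \<le> ennreal (exp (\<theta> * z)) * Q ^ Suc (Suc k)" by (simp add: ac_simps)
    then show "G (Suc k) z \<le> ennreal (exp (\<theta> * z)) * (\<integral>\<^sup>+ y. indicator {0<..x} y * ennreal (u y) * ennreal (exp (- \<theta> * y)) \<partial>lborel) ^ Suc (Suc k)" unfolding Q_def .
  qed
qed

lemma ustar_G: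
  assumes pot: "potential_density M sg u"
    and umono: "\<forall>x y. 0 < x \<longrightarrow> x \<le> y \<longrightarrow> u y \<le> u x"
    and unonneg: "\<forall>x>0. 0 \<le> u x"
    and fin: "\<And>x. (\<integral>\<^sup>+ y. indicator {0<..x} y * ennreal (u y) \<partial>lborel) < \<infinity>"
  shows "G k x = ennreal (ustar u (Suc k) x) \<and> 0 \<le> ustar u (Suc k) x"
proof (induction k arbitrary: x)
  have um[measurable]: "(\<lambda>y. indicator {0<..} y * ennreal (u y)) \<in> borel_measurable borel" by (rule u_meas_enn[OF umono])
  have umr[measurable]: "(\<lambda>y. indicator {0<..} y * u y) \<in> borel_measurable borel" by (rule u_meas_real[OF umono])
  have Gfin: "\<And>k x. G k x < \<infinity>"
  proof -
    fix k x
    have "G k x \<le> ennreal (exp (0 * x)) * (\<integral>\<^sup>+ y. indicator {0<..x} y * ennreal (u y) * ennreal (exp (- 0 * y)) \<partial>lborel) ^ Suc k"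
      using G_bound[OF pot umono unonneg, of 0 x k] by auto
    also have "\<dots> < \<infinity>" using fin[of x] by (simp add: power_less_top_ennreal del: power_Suc)
    finally show "G k x < \<infinity>" .
  qed
  case 0
  define f where "f = (\<lambda>s. indicator {0..x} s *\<^sub>R u s)"
  have gm: "(\<lambda>s. indicator {..x} s * (indicator {0<..} s * u s)) \<in> borel_measurable lborel" by measurable
  have fm: "f \<in> borel_measurable lborel"
    by (rule measurable_discrete_difference[OF gm, of "{0}"]) (auto simp: f_def indicator_def)
  have AE0: "AE y in lborel. y \<noteq> 0" by (rule AE_lborel_singleton)
  have nn: "AE y in lborel. 0 \<le> f y" using AE0 by eventually_elim (use unonneg in \<open>auto simp: f_def indicator_def\<close>)
  have eqG: "G 0 x = (\<integral>\<^sup>+ y. ennreal (f y) \<partial>lborel)"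
    unfolding G0[OF pot]
    using AE0 by (intro nn_integral_cong_AE, eventually_elim) (auto simp: f_def indicator_def)
  have "(\<integral>\<^sup>+ y. ennreal (f y) \<partial>lborel) < \<infinity>" using Gfin[of 0 x] eqG by simp
  from nn_int_eq[OF fm nn this]
  show ?case using eqG by (simp add: f_def Upot_def set_lebesgue_integral_def)
next
  have um[measurable]: "(\<lambda>y. indicator {0<..} y * ennreal (u y)) \<in> borel_measurable borel" by (rule u_meas_enn[OF umono])
  have umr[measurable]: "(\<lambda>y. indicator {0<..} y * u y) \<in> borel_measurable borel" by (rule u_meas_real[OF umono])
  have Gfin: "\<And>k x. G k x < \<infinity>"
  proof -
    fix k x
    have "G k x \<le> ennreal (exp (0 * x)) * (\<integral>\<^sup>+ y. indicator {0<..x} y * ennreal (u y) * ennreal (exp (- 0 * y)) \<partial>lborel) ^ Suc k"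
      using G_bound[OF pot umono unonneg, of 0 x k] by auto
    also have "\<dots> < \<infinity>" using fin[of x] by (simp add: power_less_top_ennreal del: power_Suc)
    finally show "G k x < \<infinity>" .
  qed
  case (Suc k)
  define v where "v = ustar u (Suc k)"
  have IH: "\<And>s. G k s = ennreal (v s)" "\<And>s. 0 \<le> v s" using Suc unfolding v_def by auto
  have v_enn: "v = (\<lambda>s. enn2real (G k s))" using IH by (auto simp: fun_eq_iff)
  have vm[measurable]: "v \<in> borel_measurable borel" unfolding v_enn by measurable
  have vneg: "\<And>s. s < 0 \<Longrightarrow> v s = 0"
  proof -
    fix s :: real assume "s < 0"
    then have "ennreal (v s) = 0" using IH(1)[of s] G_neg[of s k] by simp
    then show "v s = 0" using IH(2)[of s] by simp
  qed
  define f where "f = (\<lambda>s. indicator {0..x} s *\<^sub>R (u (x - s) * v s))"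
  have gm: "(\<lambda>s. indicator {..<x} s * ((indicator {0<..} (x - s) * u (x - s)) * v s) * indicator {0..} s) \<in> borel_measurable lborel"
    by measurable
  have fm: "f \<in> borel_measurable lborel"
    by (rule measurable_discrete_difference[OF gm, of "{x}"]) (auto simp: f_def indicator_def)
  have AEx: "AE y in lborel. y \<noteq> x" by (rule AE_lborel_singleton)
  have nn: "AE y in lborel. 0 \<le> f y" using AEx
    by eventually_elim (use unonneg IH(2) in \<open>auto simp: f_def indicator_def\<close>)
  have "G (Suc k) x = (\<integral>\<^sup>+ y. indicator {0<..} y * ennreal (u y) * G k (x - y) \<partial>lborel)"
    by (rule G_rec[OF pot um])
  also have "\<dots> = (\<integral>\<^sup>+ y. indicator {0<..} y * ennreal (u y) * ennreal (v (x - y)) \<partial>lborel)"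
    by (simp add: IH)
  also have "\<dots> = (\<integral>\<^sup>+ s. indicator {0<..} (x + - 1 * s) * ennreal (u (x + - 1 * s)) * ennreal (v (x - (x + - 1 * s))) \<partial>lborel)"
    using nn_integral_real_affine[of "\<lambda>y. indicator {0<..} y * ennreal (u y) * ennreal (v (x - y))" "-1" x] by simp
  also have "\<dots> = (\<integral>\<^sup>+ s. ennreal (f s) \<partial>lborel)"
    using AEx
  proof (intro nn_integral_cong_AE, eventually_elim)
    case (elim s)
    show ?case
    proof (cases "s < x")
      case True
      show ?thesis
      proof (cases "0 \<le> s")
        case True2: True
        then show ?thesis using True unonneg IH(2)[of s] by (simp add: f_def indicator_def ennreal_mult)
      next
        case False
        then show ?thesis using True vneg[of s] by (simp add: f_def indicator_def)
      qed
    next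
      case False
      then show ?thesis using elim by (simp add: f_def indicator_def)
    qed
  qed
  finally have eqG: "G (Suc k) x = (\<integral>\<^sup>+ s. ennreal (f s) \<partial>lborel)" .
  have "(\<integral>\<^sup>+ y. ennreal (f y) \<partial>lborel) < \<infinity>" using Gfin[of "Suc k" x] eqG by simp
  from nn_int_eq[OF fm nn this]
  show ?case using eqG by (simp add: f_def v_def set_lebesgue_integral_def)
qed

lemma Bad_null:
  assumes t: "0 \<le> t" and Gfin: "G 0 t < \<infinity>"
  shows "emeasure M (Bad t) = 0"
proof -
  define e where "e = measure M (Bad t)"
  have eE: "emeasure M (Bad t) = ennreal e" unfolding e_def by (simp add: emeasure_eq_measure)
  have e0: "0 \<le> e" unfolding e_def by simp
  obtain g where g: "G 0 t = ennreal g" "0 \<le> g" using Gfin by (cases "G 0 t") auto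
  have le: "real n * e \<le> g" for n :: nat
  proof -
    have "ennreal (real n * e) = (\<integral>\<^sup>+ s. indicator {0..real n} s * emeasure M (Bad t) \<partial>lborel)"
      using e0 by (simp add: eE nn_integral_multc ennreal_mult)
    also have "\<dots> \<le> G 0 t" unfolding G_def
    proof (intro nn_integral_mono)
      fix s :: real
      show "indicator {0..real n} s * emeasure M (Bad t) \<le> ennreal (s ^ 0 / fact 0) * indicator {0..} s * emeasure M {\<omega> \<in> space M. sg s \<omega> \<le> t}"
      proof (cases "0 \<le> s \<and> s \<le> real n")
        case True
        have "Bad t \<subseteq> {\<omega> \<in> space M. sg s \<omega> \<le> t}" using Bad_le True by (auto simp: Bad_def)
        then have "emeasure M (Bad t) \<le> emeasure M {\<omega> \<in> space M. sg s \<omega> \<le> t}"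
          by (intro emeasure_mono sg_le_sets) (use True in auto)
        then show ?thesis using True by (simp add: indicator_def)
      qed (auto simp: indicator_def)
    qed
    finally show ?thesis using g by simp
  qed
  have "e = 0"
  proof (rule ccontr)
    assume "e \<noteq> 0"
    then have "0 < e" using e0 by simp
    obtain n :: nat where "g / e < real n" using reals_Archimedean2 by blast
    then have "g < real n * e" using \<open>0 < e\<close> by (simp add: field_simps)
    then show False using le[of n] by simp
  qed
  then show ?thesis using eE by simp
qed

lemma final:
  assumes pot: "potential_density M sg u"
    and umono: "\<forall>x y. 0 < x \<longrightarrow> x \<le> y \<longrightarrow> u y \<le> u x"
    and unonneg: "\<forall>x>0. 0 \<le> u x"
    and fin: "\<And>x. (\<integral>\<^sup>+ y. indicator {0<..x} y * ennreal (u y) \<partial>lborel) < \<infinity>"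
    and t: "0 \<le> t"
  shows "integrable M (\<lambda>\<omega>. exp (l * inv_sub sg t \<omega>)) \<and>
         (\<lambda>k. l ^ k * ustar u k t) sums expectation (\<lambda>\<omega>. exp (l * inv_sub sg t \<omega>))"
proof -
  define L where "L = inv_sub sg t"
  have Lm[measurable]: "L \<in> borel_measurable M" unfolding L_def by measurable
  have UG: "\<And>k x. G k x = ennreal (ustar u (Suc k) x) \<and> 0 \<le> ustar u (Suc k) x"
    by (rule ustar_G[OF pot umono unonneg fin])
  have bad: "emeasure M (Bad t) = 0" by (rule Bad_null[OF t]) (use UG in simp)
  have AEg: "AE \<omega> in M. \<omega> \<notin> Bad t" using bad by (intro AE_not_in) (auto simp: null_sets_def)
  have AEs: "AE \<omega> in M. \<omega> \<in> space M" by (rule AE_space)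
  have Lnn: "AE \<omega> in M. 0 \<le> L \<omega>" using AEg AEs
    by eventually_elim (auto simp: L_def inv_sub_nonneg)
  have us_nn: "\<And>k. 0 \<le> ustar u k t"
    by (case_tac k) (use UG in auto)
  have mom_nn: "\<And>k. (\<integral>\<^sup>+\<omega>. ennreal (L \<omega> ^ k / fact k) \<partial>M) = ennreal (ustar u k t)"
  proof -
    fix k show "(\<integral>\<^sup>+\<omega>. ennreal (L \<omega> ^ k / fact k) \<partial>M) = ennreal (ustar u k t)"
    proof (cases k)
      case 0 then show ?thesis by (simp add: emeasure_space_1)
    next
      case (Suc j)
      then show ?thesis using moment_eq_G[OF t bad, of j] UG[of j t] by (simp add: L_def)
    qed
  qed
  have mom_int: "\<And>k. integrable M (\<lambda>\<omega>. L \<omega> ^ k / fact k) \<and> expectation (\<lambda>\<omega>. L \<omega> ^ k / fact k) = ustar u k t"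
  proof -
    fix k
    have nn: "AE \<omega> in M. 0 \<le> L \<omega> ^ k / fact k" using Lnn by eventually_elim simp
    have "(\<integral>\<^sup>+\<omega>. ennreal (L \<omega> ^ k / fact k) \<partial>M) = ennreal (ustar u k t)" by (rule mom_nn)
    then show "integrable M (\<lambda>\<omega>. L \<omega> ^ k / fact k) \<and> expectation (\<lambda>\<omega>. L \<omega> ^ k / fact k) = ustar u k t"
      using nn_integral_eq_integrable[of "\<lambda>\<omega>. L \<omega> ^ k / fact k" M "ustar u k t"] nn us_nn[of k] by simp
  qed
  define f where "f = (\<lambda>k \<omega>. l ^ k * (L \<omega> ^ k / fact k))"
  have fi: "\<And>k. integrable M (f k)"
  proof -
    fix k
    have "integrable M (\<lambda>\<omega>. L \<omega> ^ k / fact k)" using mom_int[of k] by (rule conjunct1)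
    then show "integrable M (f k)" unfolding f_def by (rule integrable_mult_right)
  qed
  have fE: "\<And>k. expectation (f k) = l ^ k * ustar u k t"
    unfolding f_def by (simp only: integral_mult_right_zero mom_int[THEN conjunct2])
  have fnE: "\<And>k. expectation (\<lambda>\<omega>. norm (f k \<omega>)) = \<bar>l\<bar> ^ k * ustar u k t"
  proof -
    fix k
    have "expectation (\<lambda>\<omega>. norm (f k \<omega>)) = expectation (\<lambda>\<omega>. \<bar>l\<bar> ^ k * (L \<omega> ^ k / fact k))"
    proof (intro integral_cong_AE)
      show "AE \<omega> in M. norm (f k \<omega>) = \<bar>l\<bar> ^ k * (L \<omega> ^ k / fact k)"
        using Lnn by eventually_elim (simp add: f_def abs_mult power_abs)
    qed (use fi in auto)
    also have "\<dots> = \<bar>l\<bar> ^ k * ustar u k t" by (simp only: integral_mult_right_zero mom_int[THEN conjunct2])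
    finally show "expectation (\<lambda>\<omega>. norm (f k \<omega>)) = \<bar>l\<bar> ^ k * ustar u k t" .
  qed
  have fsum: "\<And>\<omega>. (\<lambda>k. f k \<omega>) sums exp (l * L \<omega>)"
    using exp_converges[of "l * L _"] by (simp add: f_def power_mult_distrib divide_inverse ac_simps)
  have fnsum: "\<And>\<omega>. summable (\<lambda>k. norm (f k \<omega>))"
  proof -
    fix \<omega>
    have "summable (\<lambda>k. \<bar>l * L \<omega>\<bar> ^ k /\<^sub>R fact k)" using exp_converges[of "\<bar>l * L \<omega>\<bar>"] by (rule sums_summable)
    then show "summable (\<lambda>k. norm (f k \<omega>))"
      by (simp add: f_def abs_mult power_abs power_mult_distrib divide_inverse ac_simps)
  qed
  have msum: "summable (\<lambda>k. \<bar>l\<bar> ^ k * ustar u k t)"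
  proof -
    define \<epsilon> where "\<epsilon> = 1 / (2 * (\<bar>l\<bar> + 1))"
    have e: "0 < \<epsilon>" unfolding \<epsilon>_def by simp
    have le: "\<bar>l\<bar> * \<epsilon> \<le> 1/2" unfolding \<epsilon>_def by (simp add: field_simps)
    obtain n :: nat where n: "(\<integral>\<^sup>+ y. indicator {0<..t} y * ennreal (u y) * ennreal (exp (- real n * y)) \<partial>lborel) < ennreal \<epsilon>"
      using Q_small[OF unonneg umono fin e] by blast
    define Q where "Q = (\<integral>\<^sup>+ y. indicator {0<..t} y * ennreal (u y) * ennreal (exp (- real n * y)) \<partial>lborel)"
    have Qle: "Q \<le> ennreal \<epsilon>" using n unfolding Q_def by simp
    have bnd: "ustar u (Suc j) t \<le> exp (real n * t) * \<epsilon> ^ Suc j" for j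
    proof -
      have "ennreal (ustar u (Suc j) t) = G j t" using UG by simp
      also have "\<dots> \<le> ennreal (exp (real n * t)) * Q ^ Suc j"
        using G_bound[OF pot umono unonneg, of "real n" t j] unfolding Q_def by auto
      also have "\<dots> \<le> ennreal (exp (real n * t)) * ennreal \<epsilon> ^ Suc j"
        by (intro mult_left_mono power_mono Qle) auto
      also have "\<dots> = ennreal (exp (real n * t) * \<epsilon> ^ Suc j)"
        using e by (simp add: ennreal_mult ennreal_power)
      finally show ?thesis using e by (subst (asm) ennreal_le_iff) auto
    qed
    show ?thesis
    proof (rule summable_comparison_test')
      show "summable (\<lambda>k. exp (real n * t) * (1/2) ^ k)" by (intro summable_mult summable_geometric) simp
      fix k :: nat assume "k \<ge> 1"
      then obtain j where j: "k = Suc j" by (cases k) auto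
      have "norm (\<bar>l\<bar> ^ k * ustar u k t) = \<bar>l\<bar> ^ k * ustar u k t" using us_nn[of k] by simp
      also have "\<dots> \<le> \<bar>l\<bar> ^ k * (exp (real n * t) * \<epsilon> ^ k)"
        using bnd[of j] j by (intro mult_left_mono) auto
      also have "\<dots> = exp (real n * t) * (\<bar>l\<bar> * \<epsilon>) ^ k" by (simp add: power_mult_distrib ac_simps)
      also have "\<dots> \<le> exp (real n * t) * (1/2) ^ k"
        using le e by (intro mult_left_mono power_mono) auto
      finally show "norm (\<bar>l\<bar> ^ k * ustar u k t) \<le> exp (real n * t) * (1/2) ^ k" .
    qed
  qed
  have s2: "summable (\<lambda>k. expectation (\<lambda>\<omega>. norm (f k \<omega>)))" using msum by (simp only: fnE)
  have AEn: "AE \<omega> in M. summable (\<lambda>k. norm (f k \<omega>))" using fnsum by simp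
  have I: "integrable M (\<lambda>\<omega>. \<Sum>k. f k \<omega>)" by (rule integrable_suminf[OF fi AEn s2])
  have S: "(\<lambda>k. expectation (f k)) sums expectation (\<lambda>\<omega>. \<Sum>k. f k \<omega>)" by (rule sums_integral[OF fi AEn s2])
  have eqf: "(\<lambda>\<omega>. \<Sum>k. f k \<omega>) = (\<lambda>\<omega>. exp (l * L \<omega>))" using fsum by (simp add: sums_iff fun_eq_iff)
  show ?thesis using I S unfolding eqf fE L_def by simp
qed

end

theorem mainTheorem11:
  fixes M :: "'a measure" and sg :: "real \<Rightarrow> 'a \<Rightarrow> real"
    and Phi u :: "real \<Rightarrow> real" and nu :: "real measure"
    and C t0 beta l t :: real
  assumes "special_bernstein Phi"
    and "LK_triple_zero Phi nu" and "emeasure nu {0<..} = \<infinity>"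
    and "subordinator M sg Phi"
    and "potential_density M sg u"
    and "\<forall>x>0. 0 \<le> u x"
    and "\<forall>x y. 0 < x \<longrightarrow> x \<le> y \<longrightarrow> u y \<le> u x"
    and "0 < t0" and "0 < C" and "0 < beta" and "beta < 1"
    and "\<forall>s. 0 < s \<longrightarrow> s < t0 \<longrightarrow> u s \<le> C * s powr (beta - 1)"
    and "0 \<le> t"
  shows "integrable M (\<lambda>\<omega>. exp (l * inv_sub sg t \<omega>)) \<and>
         (\<lambda>k. l ^ k * ustar u k t) sums
           prob_space.expectation M (\<lambda>\<omega>. exp (l * inv_sub sg t \<omega>))"
  proof -
  interpret subo M sg Phi by unfold_locales (rule assms(4))
  have fin: "\<And>x. (\<integral>\<^sup>+ y. indicator {0<..x} y * ennreal (u y) \<partial>lborel) < \<infinity>"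
    by (rule u_fin[OF assms(6) assms(7) assms(8) assms(9) assms(10) assms(12)])
  show ?thesis by (rule final[OF assms(5) assms(7) assms(6) fin assms(13)])
qed

end
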